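(* Let $\mathcal G=(\mathcal N,\mathcal E_Q)$ be an undirected connected graph on the player set $\mathcal N=[n]$, and let $(\mathcal N,\mathcal S,\mathcal A,\mathbb P,(r_i)_{i\in\mathcal N},\gamma)$ be an infinite-horizon $\gamma$-discounted Markov game with $n>2$ players. Then this Markov game is an NMG with respect to $\mathcal G$ if and only if both of the following hold: (1) for each $i\in\mathcal N$, $s\in\mathcal S$, $a_i\in\mathcal A_i$, the function $r_i(s,a_i,\cdot)$ (of $a_{-i}$) is decomposable with respect to $\mathcal E_{Q,i}$, i.e. there are non-negative functions $r_{i,j}(s,a_i,\cdot):\mathcal A_j\to\mathbb R_{\ge 0}$, $j\in\mathcal E_{Q,i}$, with $r_i(s,\mathbf a)=\sum_{j\in\mathcal E_{Q,i}}r_{i,j}(s,a_i,a_j)$ for all $\mathbf a\in\mathcal A$; (2) for each $s,s'\in\mathcal S$, the function $\mathbf a\mapsto\mathbb P(s'\mid s,\mathbf a)$ is decomposable with respect to $\mathcal N_C$, i.e. if $\mathcal N_C\neq\emptyset$ there are non-negative functions $\mathbb F_i(s'\mid s,\cdot):\mathcal A_i\to\mathbb R_{\ge0}$, $i\in\mathcal N_C$, with $\mathbb P(s'\mid s,\mathbf a)=\sum_{i\in\mathcal N_C}\mathbb F_i(s'\mid s,a_i)$ for all $\mathbf a$, and if $\mathcal N_C=\emptyset$ there is a non-negative constant $\mathbb F_o(s'\mid s)$ with $\mathbb P(s'\mid s,\mathbf a)=\mathbb F_o(s'\mid s)$ for all $\mathbf a$. Moreover, the Markov game is a zero-sum NMG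 with respect to $\mathcal G$ if and only if (1) and (2) hold and, in addition, for every $s\in\mathcal S$ the network game with payoff functions $(r_{i,j}(s,\cdot,\cdot))_{(i,j)\in\mathcal E_Q}$ from (1) is zero-sum, i.e. $\sum_{i\in\mathcal N}\sum_{j\in\mathcal E_{Q,i}}r_{i,j}(s,a_i,a_j)=0$ for all $\mathbf a\in\mathcal A$. Finally, when there are exactly two players, every Markov game is an NMG and every zero-sum Markov game is a zero-sum NMG.
   Context: An infinite-horizon $\gamma$-discounted Markov game $(\mathcal N,\mathcal S,\mathcal A,\mathbb P,(r_i)_{i\in\mathcal N},\gamma)$ has finite player set $\mathcal N=[n]$, finite state space $\mathcal S$, finite action sets $\mathcal A_i$ with $\mathcal A=\prod_{i}\mathcal A_i$, transition kernel $\mathbb P(\cdot\mid s,\mathbf a)\in\Delta(\mathcal S)$, rewards $r_i:\mathcal S\times\mathcal A\to[0,R]$, and $\gamma\in(0,1)$. For a graph $(\mathcal N,\mathcal E)$, $\mathcal E_i$ denotes the set of neighbors of $i$ (excluding $i$), and $\mathcal N_C$ denotes the set of nodes adjacent to every other node (possibly empty). The game is an NMG (Markov game with networked separable interactions) with respect to $\mathcal G=(\mathcal N,\mathcal E_Q)$ if for every function $V:\mathcal S\to\mathbb R$, setting $Q_i^V(s,\mathbf a):=r_i(s,\mathbf a)+\gamma\sum_{s'}\mathbb P(s'\mid s,\mathbf a)V(s')$, there exist functions $(Q^V_{i,j})_{(i,j)\in\mathcal E_Q}$ with $Q_i^V(s,\mathbf a)=\sum_{j\in\mathcal E_{Q,i}}Q^V_{i,j}(s,a_i,a_j)$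 for all $i,s,\mathbf a$. It is a zero-sum NMG if in addition, for every $s$, the functions $Q^{\mathbf 0}_{i,j}(s,\cdot,\cdot)$ (with $V\equiv0$) form a zero-sum network game, i.e. $\sum_i\sum_{j\in\mathcal E_{Q,i}}Q^{\mathbf0}_{i,j}(s,a_i,a_j)=0$ for all $\mathbf a$. A zero-sum Markov game means $\sum_i r_i(s,\mathbf a)=0$ for all $s,\mathbf a$. *)

theory Defs
  imports Complex_Main "HOL-Library.FuncSet"
begin

text \<open>Players are 0,...,n-1; actions of all players live in a common type 'a,
  player i having the action set A i; joint action profiles are the extensional
  functions in PiE {..<n} A.
  P s a s' is the transition probability P(s' | s, a); r i s a is the reward of player i.\<close>

definition profiles :: "nat \<Rightarrow> (nat \<Rightarrow> 'a set) \<Rightarrow> (nat \<Rightarrow> 'a) set" where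
  "profiles n A = PiE {..<n} A"

definition markov_game ::
  "nat \<Rightarrow> (nat \<Rightarrow> 'a set) \<Rightarrow> ('s::finite \<Rightarrow> (nat \<Rightarrow> 'a) \<Rightarrow> 's \<Rightarrow> real)
     \<Rightarrow> (nat \<Rightarrow> 's \<Rightarrow> (nat \<Rightarrow> 'a) \<Rightarrow> real) \<Rightarrow> real \<Rightarrow> real \<Rightarrow> bool" where
  "markov_game n A P r R \<gamma> \<longleftrightarrow>
     (\<forall>i<n. finite (A i) \<and> A i \<noteq> {}) \<and>
     (\<forall>s. \<forall>a\<in>profiles n A. (\<forall>s'. P s a s' \<ge> 0) \<and> (\<Sum>s'\<in>UNIV. P s a s') = 1) \<and>
     (\<forall>i<n. \<forall>s. \<forall>a\<in>profiles n A. 0 \<le> r i s a \<and> r i s a \<le> R) \<and>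
     0 < \<gamma> \<and> \<gamma> < 1"

definition undirected_graph :: "nat \<Rightarrow> (nat \<times> nat) set \<Rightarrow> bool" where
  "undirected_graph n E \<longleftrightarrow> E \<subseteq> {..<n} \<times> {..<n} \<and> sym E \<and> (\<forall>i. (i, i) \<notin> E)"

definition connected_graph :: "nat \<Rightarrow> (nat \<times> nat) set \<Rightarrow> bool" where
  "connected_graph n E \<longleftrightarrow> undirected_graph n E \<and> (\<forall>i<n. \<forall>j<n. (i, j) \<in> E\<^sup>*)"

definition nbrs :: "(nat \<times> nat) set \<Rightarrow> nat \<Rightarrow> nat set" where
  "nbrs E i = {j. (i, j) \<in> E}"

definition central_nodes :: "nat \<Rightarrow> (nat \<times> nat) set \<Rightarrow> nat set" where
  "central_nodes n E = {i. i < n \<and> (\<forall>j<n. j \<noteq> i \<longrightarrow> (i, j) \<in> E)}"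

definition Qfun ::
  "(nat \<Rightarrow> 's::finite \<Rightarrow> (nat \<Rightarrow> 'a) \<Rightarrow> real) \<Rightarrow> ('s \<Rightarrow> (nat \<Rightarrow> 'a) \<Rightarrow> 's \<Rightarrow> real)
     \<Rightarrow> real \<Rightarrow> ('s \<Rightarrow> real) \<Rightarrow> nat \<Rightarrow> 's \<Rightarrow> (nat \<Rightarrow> 'a) \<Rightarrow> real" where
  "Qfun r P \<gamma> V i s a = r i s a + \<gamma> * (\<Sum>s'\<in>UNIV. P s a s' * V s')"

definition Q_decomp where
  "Q_decomp n A E r P \<gamma> V Qd \<longleftrightarrow>
     (\<forall>i<n. \<forall>s. \<forall>a\<in>profiles n A.
        Qfun r P \<gamma> V i s a = (\<Sum>j\<in>nbrs E i. Qd i j s (a i) (a j)))"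

definition is_NMG where
  "is_NMG n A P r \<gamma> E \<longleftrightarrow> (\<forall>V. \<exists>Qd. Q_decomp n A E r P \<gamma> V Qd)"

definition zero_sum_network where
  "zero_sum_network n A E Qd \<longleftrightarrow>
     (\<forall>s. \<forall>a\<in>profiles n A. (\<Sum>i<n. \<Sum>j\<in>nbrs E i. Qd i j s (a i) (a j)) = 0)"

definition is_zero_sum_NMG where
  "is_zero_sum_NMG n A P r \<gamma> E \<longleftrightarrow> is_NMG n A P r \<gamma> E \<and>
     (\<exists>Qd. Q_decomp n A E r P \<gamma> (\<lambda>_. 0) Qd \<and> zero_sum_network n A E Qd)"

definition zero_sum_MG where
  "zero_sum_MG n A r \<longleftrightarrow> (\<forall>s. \<forall>a\<in>profiles n A. (\<Sum>i<n. r i s a) = 0)"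

definition reward_decomp where
  "reward_decomp n A E r rd \<longleftrightarrow>
     (\<forall>i<n. \<forall>j\<in>nbrs E i. \<forall>s. \<forall>ai\<in>A i. \<forall>aj\<in>A j. rd i j s ai aj \<ge> 0) \<and>
     (\<forall>i<n. \<forall>s. \<forall>a\<in>profiles n A. r i s a = (\<Sum>j\<in>nbrs E i. rd i j s (a i) (a j)))"

definition cond1 where
  "cond1 n A E r \<longleftrightarrow> (\<exists>rd. reward_decomp n A E r rd)"

definition cond1_zero_sum where
  "cond1_zero_sum n A E r \<longleftrightarrow> (\<exists>rd. reward_decomp n A E r rd \<and> zero_sum_network n A E rd)"

definition cond2 where
  "cond2 n A E P \<longleftrightarrow> (\<forall>s s'.
     (central_nodes n E \<noteq> {} \<longrightarrow>
        (\<exists>F :: nat \<Rightarrow> _ \<Rightarrow> real. (\<forall>i\<in>central_nodes n E. \<forall>ai\<in>A i. F i ai \<ge> 0) \<and>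
           (\<forall>a\<in>profiles n A. P s a s' = (\<Sum>i\<in>central_nodes n E. F i (a i))))) \<and>
     (central_nodes n E = {} \<longrightarrow>
        (\<exists>c::real. c \<ge> 0 \<and> (\<forall>a\<in>profiles n A. P s a s' = c))))"

end

theory Submission
  imports Defs
begin


lemma prof_upd: "b \<in> profiles n A \<Longrightarrow> k < n \<Longrightarrow> x \<in> A k \<Longrightarrow> b(k:=x) \<in> profiles n A"
  unfolding profiles_def by (auto simp: PiE_def extensional_def)

lemma prof_ext: "b \<in> profiles n A \<Longrightarrow> J \<subseteq> {..<n} \<Longrightarrow> (\<forall>j\<in>J. z j \<in> A j)
   \<Longrightarrow> (\<lambda>k. if k \<in> J then z k else b k) \<in> profiles n A"
  unfolding profiles_def by (auto simp: PiE_def extensional_def)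

lemma prof_ne: "\<forall>i<n. A i \<noteq> {} \<Longrightarrow> profiles n A \<noteq> {}"
  unfolding profiles_def by (simp add: PiE_eq_empty_iff)

lemma prof_mem: "a \<in> profiles n A \<Longrightarrow> k < n \<Longrightarrow> a k \<in> A k"
  unfolding profiles_def by auto

lemma prof_out: "a \<in> profiles n A \<Longrightarrow> \<not> k < n \<Longrightarrow> a k = undefined"
  unfolding profiles_def by (auto simp: PiE_def extensional_def)

lemma nbrs_sub: assumes "undirected_graph n E" shows "nbrs E i \<subseteq> {..<n}"
proof
  fix j assume "j \<in> nbrs E i"
  then have "(i, j) \<in> E" by (simp add: nbrs_def)
  then show "j \<in> {..<n}" using assms unfolding undirected_graph_def by (meson SigmaD2 subsetD)
qed

lemma nbrs_fin: "undirected_graph n E \<Longrightarrow> finite (nbrs E i)"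
  by (meson finite_lessThan finite_subset nbrs_sub)

lemma nbrs_irr: "undirected_graph n E \<Longrightarrow> i \<notin> nbrs E i"
  unfolding undirected_graph_def nbrs_def by auto

lemma nbrs_ne: assumes "connected_graph n E" "2 \<le> n" "i < n" shows "nbrs E i \<noteq> {}"
proof -
  define j where "j = (if i = 0 then 1 else (0::nat))"
  have j: "j < n" "j \<noteq> i" using assms by (auto simp: j_def)
  have "(i, j) \<in> E\<^sup>*" using assms j unfolding connected_graph_def by auto
  then show ?thesis
  proof (cases rule: converse_rtranclE)
    case base then show ?thesis using j by simp
  next
    case (step y) then show ?thesis unfolding nbrs_def by auto
  qed
qed

definition shiftf :: "nat set \<Rightarrow> (nat \<Rightarrow> 'a set) \<Rightarrow> (nat \<Rightarrow> 'a \<Rightarrow> real) \<Rightarrow> real \<Rightarrow> nat \<Rightarrow> 'a \<Rightarrow> real" where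
  "shiftf J A u c j y = u j y - Min (u j ` A j) + (c + (\<Sum>l\<in>J. Min (u l ` A l))) / real (card J)"

lemma min_attained: assumes "\<forall>j\<in>J. finite (A j) \<and> A j \<noteq> {}"
  shows "\<exists>x. \<forall>j\<in>J. x j \<in> A j \<and> u j (x j) = Min (u j ` A j)"
proof -
  have "\<forall>j\<in>J. \<exists>y. y \<in> A j \<and> u j y = Min (u j ` A j)"
  proof
    fix j assume "j \<in> J"
    then have "Min (u j ` A j) \<in> u j ` A j" using assms by (intro Min_in) auto
    then show "\<exists>y. y \<in> A j \<and> u j y = Min (u j ` A j)" by force
  qed
  then show ?thesis by (rule bchoice)
qed

lemma shift_sum: assumes "finite J" "J \<noteq> {}"
  shows "(\<Sum>j\<in>J. shiftf J A u c j (x j)) = c + (\<Sum>j\<in>J. u j (x j))"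
proof -
  have "card J > 0" using assms by (simp add: card_gt_0_iff)
  then show ?thesis unfolding shiftf_def
    by (simp add: sum.distrib sum_subtractf)
qed

lemma shift_nn: assumes "finite J" "\<forall>j\<in>J. finite (A j) \<and> A j \<noteq> {}"
  and nn: "\<And>x. (\<forall>j\<in>J. x j \<in> A j) \<Longrightarrow> 0 \<le> c + (\<Sum>j\<in>J. u j (x j))"
  and "j \<in> J" "y \<in> A j"
  shows "0 \<le> shiftf J A u c j y"
proof -
  obtain x where x: "\<forall>j\<in>J. x j \<in> A j \<and> u j (x j) = Min (u j ` A j)"
    using min_attained[OF assms(2)] by blast
  have "0 \<le> c + (\<Sum>j\<in>J. u j (x j))" by (rule nn) (use x in auto)
  also have "(\<Sum>j\<in>J. u j (x j)) = (\<Sum>j\<in>J. Min (u j ` A j))" using x by (auto intro: sum.cong)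
  finally have K: "0 \<le> (c + (\<Sum>l\<in>J. Min (u l ` A l))) / real (card J)" by simp
  have "Min (u j ` A j) \<le> u j y" using assms by (intro Min_le) auto
  then show ?thesis unfolding shiftf_def using K by linarith
qed




definition decomp_at where
  "decomp_at n A E f i \<longleftrightarrow> (\<exists>g. \<forall>a\<in>profiles n A. f a = (\<Sum>j\<in>nbrs E i. g j (a i) (a j)))"

lemma mixed:
  fixes f :: "(nat \<Rightarrow> 'a) \<Rightarrow> real"
  assumes "2 < n" "\<forall>i<n. decomp_at n A E f i"
    and "k < n" "l < n" "k \<noteq> l" "b \<in> profiles n A" "x \<in> A k" "y \<in> A l"
  shows "f (b(k:=x, l:=y)) - f (b(l:=y)) = f (b(k:=x)) - f b"
proof -
  obtain i where i: "i < n" "i \<noteq> k" "i \<noteq> l"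
  proof -
    have "\<exists>i\<in>{0,1,2::nat}. i \<noteq> k \<and> i \<noteq> l" by auto
    then obtain i where "i \<in> {0,1,2::nat}" "i \<noteq> k" "i \<noteq> l" by blast
    moreover have "i < n" using calculation(1) assms(1) by auto
    ultimately show ?thesis using that by blast
  qed
  obtain g where g: "\<forall>a\<in>profiles n A. f a = (\<Sum>j\<in>nbrs E i. g j (a i) (a j))"
    using assms(2) i(1) unfolding decomp_at_def by blast
  have p1: "b(k:=x, l:=y) \<in> profiles n A" using assms by (intro prof_upd) auto
  have p2: "b(l:=y) \<in> profiles n A" using assms by (intro prof_upd) auto
  have p3: "b(k:=x) \<in> profiles n A" using assms by (intro prof_upd) auto
  have t: "\<And>j. g j (b i) ((b(k:=x, l:=y)) j) - g j (b i) ((b(l:=y)) j)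
       = g j (b i) ((b(k:=x)) j) - g j (b i) (b j)"
    using assms(5) by (cases "j = k"; cases "j = l") simp_all
  have "f (b(k:=x, l:=y)) - f (b(l:=y)) = (\<Sum>j\<in>nbrs E i. g j (b i) ((b(k:=x, l:=y)) j) - g j (b i) ((b(l:=y)) j))"
    using g p1 p2 i by (simp add: sum_subtractf)
  also have "\<dots> = (\<Sum>j\<in>nbrs E i. g j (b i) ((b(k:=x)) j) - g j (b i) (b j))"
    using t by simp
  also have "\<dots> = f (b(k:=x)) - f b"
    using g p3 assms(6) i by (simp add: sum_subtractf)
  finally show ?thesis .
qed

lemma indep:
  fixes f :: "(nat \<Rightarrow> 'a) \<Rightarrow> real"
  assumes "undirected_graph n E" "\<forall>i<n. decomp_at n A E f i"
    and "k < n" "k \<notin> central_nodes n E" "b \<in> profiles n A" "x \<in> A k"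
  shows "f (b(k:=x)) = f b"
proof -
  obtain i where i: "i < n" "i \<noteq> k" "(k, i) \<notin> E"
    using assms(3,4) unfolding central_nodes_def by auto
  have ki: "k \<notin> nbrs E i" using i assms(1) unfolding undirected_graph_def nbrs_def sym_def by blast
  obtain g where g: "\<forall>a\<in>profiles n A. f a = (\<Sum>j\<in>nbrs E i. g j (a i) (a j))"
    using assms(2) i(1) unfolding decomp_at_def by blast
  have p: "b(k:=x) \<in> profiles n A" using assms by (intro prof_upd) auto
  have "f (b(k:=x)) = (\<Sum>j\<in>nbrs E i. g j ((b(k:=x)) i) ((b(k:=x)) j))" using g p by simp
  also have "\<dots> = (\<Sum>j\<in>nbrs E i. g j (b i) (b j))"
    using ki i by (intro sum.cong) auto
  also have "\<dots> = f b" using g assms(5) by simp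
  finally show ?thesis .
qed

lemma sep_ind:
  fixes f :: "(nat \<Rightarrow> 'a) \<Rightarrow> real"
  assumes mx: "\<And>k l b x y. k < n \<Longrightarrow> l < n \<Longrightarrow> k \<noteq> l \<Longrightarrow> b \<in> profiles n A \<Longrightarrow> x \<in> A k \<Longrightarrow> y \<in> A l
      \<Longrightarrow> f (b(k:=x, l:=y)) - f (b(l:=y)) = f (b(k:=x)) - f b"
  shows "finite S \<Longrightarrow> S \<subseteq> {..<n} \<Longrightarrow> \<forall>a b. a \<in> profiles n A \<longrightarrow> b \<in> profiles n A \<longrightarrow>
     (\<forall>k. k \<notin> S \<longrightarrow> a k = b k) \<longrightarrow> f a = f b + (\<Sum>k\<in>S. f (b(k:= a k)) - f b)"
proof (induction S rule: finite_induct)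
  case empty
  then show ?case by (auto intro!: arg_cong[where f=f] ext)
next
  case (insert k S)
  show ?case
  proof (intro allI impI)
    fix a b assume a: "a \<in> profiles n A" and b: "b \<in> profiles n A"
      and ag: "\<forall>m. m \<notin> insert k S \<longrightarrow> a m = b m"
    have kn: "k < n" using insert by auto
    define b' where "b' = b(k := a k)"
    have b': "b' \<in> profiles n A" unfolding b'_def using prof_upd[OF b kn prof_mem[OF a kn]] .
    have ag': "\<forall>m. m \<notin> S \<longrightarrow> a m = b' m"
    proof (intro allI impI)
      fix m assume "m \<notin> S"
      then show "a m = b' m" using ag unfolding b'_def by (cases "m = k") simp_all
    qed
    have Ssub: "S \<subseteq> {..<n}" using insert.prems by simp
    have IH: "f a = f b' + (\<Sum>m\<in>S. f (b'(m:= a m)) - f b')"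
      using insert.IH[OF Ssub] a b' ag' by blast
    have "(\<Sum>m\<in>S. f (b'(m:= a m)) - f b') = (\<Sum>m\<in>S. f (b(m:= a m)) - f b)"
    proof (intro sum.cong refl)
      fix m assume m: "m \<in> S"
      have mn: "m < n" "m \<noteq> k" using Ssub insert.hyps(2) m by auto
      show "f (b'(m:= a m)) - f b' = f (b(m:= a m)) - f b"
        unfolding b'_def using mx[OF kn mn(1) mn(2)[symmetric] b prof_mem[OF a kn] prof_mem[OF a mn(1)]] by linarith
    qed
    then show "f a = f b + (\<Sum>m\<in>insert k S. f (b(m:= a m)) - f b)"
      using IH insert.hyps unfolding b'_def by simp
  qed
qed

lemma central_decomp:
  fixes f :: "(nat \<Rightarrow> 'a) \<Rightarrow> real"
  assumes n: "2 < n" and G: "undirected_graph n E" and fA: "\<forall>i<n. finite (A i) \<and> A i \<noteq> {}"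
    and nn: "\<forall>a\<in>profiles n A. 0 \<le> f a"
    and dec: "\<forall>i<n. decomp_at n A E f i"
  shows "(central_nodes n E \<noteq> {} \<longrightarrow>
        (\<exists>F :: nat \<Rightarrow> _ \<Rightarrow> real. (\<forall>i\<in>central_nodes n E. \<forall>ai\<in>A i. F i ai \<ge> 0) \<and>
           (\<forall>a\<in>profiles n A. f a = (\<Sum>i\<in>central_nodes n E. F i (a i))))) \<and>
     (central_nodes n E = {} \<longrightarrow>
        (\<exists>c::real. c \<ge> 0 \<and> (\<forall>a\<in>profiles n A. f a = c)))"
proof -
  let ?C = "central_nodes n E"
  obtain b where b: "b \<in> profiles n A" using prof_ne[of n A] fA by auto
  define h where "h k x = f (b(k:=x)) - f b" for k x
  have Csub: "?C \<subseteq> {..<n}" unfolding central_nodes_def by auto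
  have finC: "finite ?C" using Csub by (rule finite_subset) simp
  have mx: "\<And>k l b x y. k < n \<Longrightarrow> l < n \<Longrightarrow> k \<noteq> l \<Longrightarrow> b \<in> profiles n A \<Longrightarrow> x \<in> A k \<Longrightarrow> y \<in> A l
      \<Longrightarrow> f (b(k:=x, l:=y)) - f (b(l:=y)) = f (b(k:=x)) - f b"
    by (rule mixed[OF n dec])
  have sep: "\<forall>a b. a \<in> profiles n A \<longrightarrow> b \<in> profiles n A \<longrightarrow>
     (\<forall>k. k \<notin> {..<n} \<longrightarrow> a k = b k) \<longrightarrow> f a = f b + (\<Sum>k\<in>{..<n}. f (b(k:= a k)) - f b)"
    by (rule sep_ind[where f=f and n=n and A=A, OF mx finite_lessThan subset_refl])
  have rep: "f a = f b + (\<Sum>k\<in>?C. h k (a k))" if a: "a \<in> profiles n A" for a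
  proof -
    have z: "\<forall>k\<in>{..<n} - ?C. h k (a k) = 0"
      using indep[OF G dec _ _ b] prof_mem[OF a] unfolding h_def by auto
    have ab: "\<And>k. k \<notin> {..<n} \<Longrightarrow> a k = b k" using prof_out[OF a] prof_out[OF b] by simp
    have "f a = f b + (\<Sum>k\<in>{..<n}. h k (a k))"
      using sep[rule_format, OF a b ab] unfolding h_def .
    also have "(\<Sum>k\<in>{..<n}. h k (a k)) = (\<Sum>k\<in>?C. h k (a k))"
      by (rule sum.mono_neutral_right[OF finite_lessThan Csub z])
    finally show ?thesis .
  qed
  show ?thesis
  proof (intro conjI impI)
    assume C: "?C = {}"
    show "\<exists>c::real. c \<ge> 0 \<and> (\<forall>a\<in>profiles n A. f a = c)"
    proof (intro exI[of _ "f b"] conjI ballI)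
      show "0 \<le> f b" using nn b by blast
    next
      fix a assume a: "a \<in> profiles n A"
      show "f a = f b" using rep[OF a] C by simp
    qed
  next
    assume C: "?C \<noteq> {}"
    have fA': "\<forall>j\<in>?C. finite (A j) \<and> A j \<noteq> {}" using fA Csub by auto
    have nn': "0 \<le> f b + (\<Sum>j\<in>?C. h j (x j))" if x: "\<forall>j\<in>?C. x j \<in> A j" for x
    proof -
      let ?a = "\<lambda>k. if k \<in> ?C then x k else b k"
      have pa: "?a \<in> profiles n A" using prof_ext[OF b Csub] x by blast
      have "f ?a = f b + (\<Sum>j\<in>?C. h j (x j))" using rep[OF pa] by simp
      then show ?thesis using bspec[OF nn pa] by linarith
    qed
    show "\<exists>F :: nat \<Rightarrow> _ \<Rightarrow> real. (\<forall>i\<in>?C. \<forall>ai\<in>A i. F i ai \<ge> 0) \<and>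
           (\<forall>a\<in>profiles n A. f a = (\<Sum>i\<in>?C. F i (a i)))"
    proof (intro exI[of _ "shiftf ?C A h (f b)"] conjI ballI)
      fix i ai assume "i \<in> ?C" "ai \<in> A i"
      then show "0 \<le> shiftf ?C A h (f b) i ai" using shift_nn[where u=h and c="f b", OF finC fA' nn'] by blast
    next
      fix a assume a: "a \<in> profiles n A"
      then show "f a = (\<Sum>i\<in>?C. shiftf ?C A h (f b) i (a i))"
        using rep[OF a] shift_sum[OF finC C, of A h "f b" a] by simp
    qed
  qed
qed




lemma trans_decomp:
  fixes P :: "'s::finite \<Rightarrow> (nat \<Rightarrow> 'a) \<Rightarrow> 's \<Rightarrow> real"
  assumes c2: "cond2 n A E P" and G: "connected_graph n E" and n: "2 \<le> n"
  shows "\<exists>T. \<forall>i<n. \<forall>s s'. \<forall>a\<in>profiles n A. P s a s' = (\<Sum>j\<in>nbrs E i. T i j s s' (a i) (a j))"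
proof -
  let ?C = "central_nodes n E"
  have UG: "undirected_graph n E" using G unfolding connected_graph_def by auto
  define j0 where "j0 i = (SOME j. j \<in> nbrs E i)" for i
  have j0: "j0 i \<in> nbrs E i" if "i < n" for i
    using nbrs_ne[OF G n that] unfolding j0_def by (simp add: some_in_eq)
  have fin: "finite (nbrs E i)" for i using nbrs_fin[OF UG] .
  show ?thesis
  proof (cases "?C = {}")
    case True
    have "\<forall>s s'. \<exists>c::real. c \<ge> 0 \<and> (\<forall>a\<in>profiles n A. P s a s' = c)"
      using c2 True unfolding cond2_def by auto
    then obtain c where c: "\<And>s s'. \<forall>a\<in>profiles n A. P s a s' = c s s'"
      by metis
    show ?thesis
    proof (intro exI[of _ "\<lambda>i j s s' x y. if j = j0 i then c s s' else 0"] allI impI ballI)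
      fix i s s' a assume "i < n" "a \<in> profiles n A"
      then show "P s a s' = (\<Sum>j\<in>nbrs E i. if j = j0 i then c s s' else 0)"
        using c j0 fin by (simp add: sum.delta')
    qed
  next
    case False
    have "\<forall>s s'. \<exists>F :: nat \<Rightarrow> _ \<Rightarrow> real. (\<forall>a\<in>profiles n A. P s a s' = (\<Sum>i\<in>?C. F i (a i)))"
      using c2 False unfolding cond2_def by blast
    then obtain F where F: "\<And>s s'. \<forall>a\<in>profiles n A. P s a s' = (\<Sum>i\<in>?C. F s s' i (a i))"
      by metis
    have Csub: "?C \<subseteq> {..<n}" unfolding central_nodes_def by auto
    have finC: "finite ?C" using Csub by (rule finite_subset) simp
    have NC: "nbrs E i \<inter> ?C = ?C - {i}" if "i < n" for i
    proof -
      have "(i, j) \<in> E" if "j \<in> ?C" "j \<noteq> i" for j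
        using that \<open>i < n\<close> UG unfolding central_nodes_def undirected_graph_def sym_def by blast
      then show ?thesis using nbrs_irr[OF UG, of i] unfolding nbrs_def by auto
    qed
    show ?thesis
    proof (intro exI[of _ "\<lambda>i j s s' x y. (if j \<in> ?C then F s s' j y else 0)
          + (if i \<in> ?C \<and> j = j0 i then F s s' i x else 0)"] allI impI ballI)
      fix i s s' a assume i: "i < n" and a: "a \<in> profiles n A"
      have s1: "(\<Sum>j\<in>nbrs E i. if j \<in> ?C then F s s' j (a j) else 0) = (\<Sum>j\<in>?C - {i}. F s s' j (a j))"
        using fin NC[OF i] by (simp add: sum.If_cases)
      have s2: "(\<Sum>j\<in>nbrs E i. if i \<in> ?C \<and> j = j0 i then F s s' i (a i) else 0)
          = (if i \<in> ?C then F s s' i (a i) else 0)"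
        using fin j0[OF i] by (cases "i \<in> ?C") (simp_all add: sum.delta')
      have s3: "(\<Sum>j\<in>?C - {i}. F s s' j (a j)) + (if i \<in> ?C then F s s' i (a i) else 0)
          = (\<Sum>j\<in>?C. F s s' j (a j))"
        using finC by (cases "i \<in> ?C") (simp_all add: sum_diff1)
      show "P s a s' = (\<Sum>j\<in>nbrs E i. (if j \<in> ?C then F s s' j (a j) else 0)
          + (if i \<in> ?C \<and> j = j0 i then F s s' i (a i) else 0))"
        using F a s1 s2 s3 by (simp add: sum.distrib)
    qed
  qed
qed

lemma nmg_from:
  fixes P :: "'s::finite \<Rightarrow> (nat \<Rightarrow> 'a) \<Rightarrow> 's \<Rightarrow> real"
  assumes rd: "reward_decomp n A E r rd"
    and T: "\<forall>i<n. \<forall>s s'. \<forall>a\<in>profiles n A. P s a s' = (\<Sum>j\<in>nbrs E i. T i j s s' (a i) (a j))"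
  shows "is_NMG n A P r \<gamma> E"
  unfolding is_NMG_def
proof
  fix V :: "'s \<Rightarrow> real"
  show "\<exists>Qd. Q_decomp n A E r P \<gamma> V Qd"
  proof (intro exI[of _ "\<lambda>i j s x y. rd i j s x y + \<gamma> * (\<Sum>s'\<in>UNIV. V s' * T i j s s' x y)"])
    show "Q_decomp n A E r P \<gamma> V (\<lambda>i j s x y. rd i j s x y + \<gamma> * (\<Sum>s'\<in>UNIV. V s' * T i j s s' x y))"
      unfolding Q_decomp_def
    proof (intro allI impI ballI)
      fix i s a assume i: "i < n" and a: "a \<in> profiles n A"
      have "(\<Sum>j\<in>nbrs E i. \<Sum>s'\<in>UNIV. V s' * T i j s s' (a i) (a j))
          = (\<Sum>s'\<in>UNIV. V s' * (\<Sum>j\<in>nbrs E i. T i j s s' (a i) (a j)))"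
        by (simp add: sum_distrib_left sum.swap[of _ "nbrs E i"])
      also have "\<dots> = (\<Sum>s'\<in>UNIV. P s a s' * V s')"
        using T i a by (simp add: mult.commute)
      finally have e: "(\<Sum>j\<in>nbrs E i. \<Sum>s'\<in>UNIV. V s' * T i j s s' (a i) (a j)) = (\<Sum>s'\<in>UNIV. P s a s' * V s')" .
      have r: "r i s a = (\<Sum>j\<in>nbrs E i. rd i j s (a i) (a j))"
        using rd i a unfolding reward_decomp_def by auto
      show "Qfun r P \<gamma> V i s a = (\<Sum>j\<in>nbrs E i. rd i j s (a i) (a j) + \<gamma> * (\<Sum>s'\<in>UNIV. V s' * T i j s s' (a i) (a j)))"
        unfolding Qfun_def using e r by (simp add: sum.distrib sum_distrib_left[symmetric])
    qed
  qed
qed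




lemma Qfun0: "Qfun r P \<gamma> (\<lambda>_. 0) i s a = r i s a"
  unfolding Qfun_def by simp

lemma Qfun_ind: "Qfun r P \<gamma> (\<lambda>t. if t = s' then 1 else 0) i s a = r i s a + \<gamma> * P s a s'"
  unfolding Qfun_def by (simp add: if_distrib[where f="\<lambda>x. _ * x"] sum.delta' cong: if_cong)

lemma nmg_cond1:
  fixes P :: "'s::finite \<Rightarrow> (nat \<Rightarrow> 'a) \<Rightarrow> 's \<Rightarrow> real"
  assumes N: "is_NMG n A P r \<gamma> E" and M: "markov_game n A P r R \<gamma>"
    and G: "connected_graph n E" and n: "2 \<le> n"
  shows "cond1 n A E r"
proof -
  have UG: "undirected_graph n E" using G unfolding connected_graph_def by auto
  obtain Qd0 where Q0: "Q_decomp n A E r P \<gamma> (\<lambda>_. 0) Qd0" using N unfolding is_NMG_def by blast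
  have rQ: "r i s a = (\<Sum>j\<in>nbrs E i. Qd0 i j s (a i) (a j))" if "i < n" "a \<in> profiles n A" for i s a
    using Q0 that unfolding Q_decomp_def Qfun0 by auto
  have fA: "\<forall>i<n. finite (A i) \<and> A i \<noteq> {}" using M unfolding markov_game_def by auto
  obtain b where b: "b \<in> profiles n A" using prof_ne[of n A] fA by auto
  have rnn: "0 \<le> r i s a" if "i < n" "a \<in> profiles n A" for i s a
    using M that unfolding markov_game_def by auto
  define rd where "rd i j s x y = shiftf (nbrs E i) A (\<lambda>j y. Qd0 i j s x y) 0 j y" for i j s x y
  have "reward_decomp n A E r rd"
    unfolding reward_decomp_def
  proof (intro conjI allI impI ballI)
    fix i j s ai aj assume i: "i < n" and j: "j \<in> nbrs E i" and ai: "ai \<in> A i" and aj: "aj \<in> A j"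
    let ?J = "nbrs E i"
    have fJ: "\<forall>j\<in>?J. finite (A j) \<and> A j \<noteq> {}" using fA nbrs_sub[OF UG] by auto
    have nn: "0 \<le> 0 + (\<Sum>j\<in>?J. Qd0 i j s ai (z j))" if z: "\<forall>j\<in>?J. z j \<in> A j" for z
    proof -
      let ?a = "\<lambda>k. if k \<in> ?J then z k else (b(i:=ai)) k"
      have pa: "?a \<in> profiles n A"
        using prof_ext[OF prof_upd[OF b i ai] nbrs_sub[OF UG]] z by blast
      have ia: "?a i = ai" using nbrs_irr[OF UG, of i] by simp
      have "r i s ?a = (\<Sum>j\<in>?J. Qd0 i j s ai (z j))"
        using rQ[OF i pa] ia by simp
      then show ?thesis using rnn[OF i pa, of s] by simp
    qed
    show "0 \<le> rd i j s ai aj" unfolding rd_def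
      by (rule shift_nn[where u="\<lambda>j y. Qd0 i j s ai y" and c=0, OF nbrs_fin[OF UG] fJ nn j aj])
  next
    fix i s a assume i: "i < n" and a: "a \<in> profiles n A"
    show "r i s a = (\<Sum>j\<in>nbrs E i. rd i j s (a i) (a j))"
      unfolding rd_def using shift_sum[OF nbrs_fin[OF UG] nbrs_ne[OF G n i], of A "\<lambda>j. Qd0 i j s (a i)" 0 a] rQ[OF i a, of s] by simp
  qed
  then show ?thesis unfolding cond1_def by blast
qed

lemma nmg_cond2:
  fixes P :: "'s::finite \<Rightarrow> (nat \<Rightarrow> 'a) \<Rightarrow> 's \<Rightarrow> real"
  assumes N: "is_NMG n A P r \<gamma> E" and M: "markov_game n A P r R \<gamma>"
    and G: "connected_graph n E" and n: "2 < n"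
  shows "cond2 n A E P"
  unfolding cond2_def
proof (intro allI)
  fix s s'
  have UG: "undirected_graph n E" using G unfolding connected_graph_def by auto
  have fA: "\<forall>i<n. finite (A i) \<and> A i \<noteq> {}" using M unfolding markov_game_def by auto
  have gam: "\<gamma> > 0" using M unfolding markov_game_def by auto
  have nn: "\<forall>a\<in>profiles n A. 0 \<le> P s a s'" using M unfolding markov_game_def by blast
  obtain Qd0 where Q0: "Q_decomp n A E r P \<gamma> (\<lambda>_. 0) Qd0" using N unfolding is_NMG_def by blast
  obtain Qd1 where Q1: "Q_decomp n A E r P \<gamma> (\<lambda>t. if t = s' then 1 else 0) Qd1"
    using N unfolding is_NMG_def by blast
  have dec: "\<forall>i<n. decomp_at n A E (\<lambda>a. P s a s') i"
  proof (intro allI impI)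
    fix i assume i: "i < n"
    show "decomp_at n A E (\<lambda>a. P s a s') i" unfolding decomp_at_def
    proof (rule exI[of _ "\<lambda>j x y. (Qd1 i j s x y - Qd0 i j s x y) / \<gamma>"], intro ballI)
      fix a assume a: "a \<in> profiles n A"
      have e0: "r i s a = (\<Sum>j\<in>nbrs E i. Qd0 i j s (a i) (a j))"
        using Q0 i a unfolding Q_decomp_def Qfun0 by blast
      have e1: "r i s a + \<gamma> * P s a s' = (\<Sum>j\<in>nbrs E i. Qd1 i j s (a i) (a j))"
        using Q1 i a unfolding Q_decomp_def Qfun_ind by blast
      have "\<gamma> * P s a s' = (\<Sum>j\<in>nbrs E i. Qd1 i j s (a i) (a j) - Qd0 i j s (a i) (a j))"
        using e0 e1 by (simp add: sum_subtractf)
      then show "P s a s' = (\<Sum>j\<in>nbrs E i. (Qd1 i j s (a i) (a j) - Qd0 i j s (a i) (a j)) / \<gamma>)"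
        using gam by (simp add: sum_divide_distrib[symmetric] eq_divide_eq mult.commute)
    qed
  qed
  show "(central_nodes n E \<noteq> {} \<longrightarrow>
        (\<exists>F :: nat \<Rightarrow> _ \<Rightarrow> real. (\<forall>i\<in>central_nodes n E. \<forall>ai\<in>A i. F i ai \<ge> 0) \<and>
           (\<forall>a\<in>profiles n A. P s a s' = (\<Sum>i\<in>central_nodes n E. F i (a i))))) \<and>
     (central_nodes n E = {} \<longrightarrow>
        (\<exists>c::real. c \<ge> 0 \<and> (\<forall>a\<in>profiles n A. P s a s' = c)))"
    by (rule central_decomp[OF n UG fA nn dec])
qed




lemma two_nbrs: assumes G: "connected_graph 2 E" and i: "i < 2" shows "nbrs E i = {1 - i}"
proof -
  have UG: "undirected_graph 2 E" using G unfolding connected_graph_def by auto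
  have "nbrs E i \<subseteq> {..<2}" "i \<notin> nbrs E i" "nbrs E i \<noteq> {}"
    using nbrs_sub[OF UG] nbrs_irr[OF UG] nbrs_ne[OF G _ i] by auto
  then show ?thesis using i by (auto simp: less_2_cases_iff)
qed

lemma two_decomp:
  assumes G: "connected_graph 2 E" and i: "i < 2" and a: "a \<in> profiles 2 A"
  shows "(\<Sum>j\<in>nbrs E i. Qfun r P \<gamma> V i s (\<lambda>k. if k = i then a i else if k = j then a j else undefined))
     = Qfun r P \<gamma> V i s a"
proof -
  have "(\<lambda>k. if k = i then a i else if k = 1 - i then a (1 - i) else undefined) = a"
  proof
    fix k show "(if k = i then a i else if k = 1 - i then a (1 - i) else undefined) = a k"
      using i prof_out[OF a, of k] by (cases "k < 2") auto
  qed
  then show ?thesis unfolding two_nbrs[OF G i] by simp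
qed

theorem proposition1:
  fixes n :: nat and A :: "nat \<Rightarrow> 'a set"
    and P :: "'s::finite \<Rightarrow> (nat \<Rightarrow> 'a) \<Rightarrow> 's \<Rightarrow> real"
    and r :: "nat \<Rightarrow> 's \<Rightarrow> (nat \<Rightarrow> 'a) \<Rightarrow> real"
    and R \<gamma> :: real and E :: "(nat \<times> nat) set"
  assumes "markov_game n A P r R \<gamma>"
    and "connected_graph n E"
  shows "(2 < n \<longrightarrow>
            (is_NMG n A P r \<gamma> E \<longleftrightarrow> cond1 n A E r \<and> cond2 n A E P) \<and>
            (is_zero_sum_NMG n A P r \<gamma> E \<longleftrightarrow> cond1_zero_sum n A E r \<and> cond2 n A E P)) \<and>
         (n = 2 \<longrightarrow>
            is_NMG n A P r \<gamma> E \<and> (zero_sum_MG n A r \<longrightarrow> is_zero_sum_NMG n A P r \<gamma> E))"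
proof (intro conjI impI)
  note M = assms(1) and G = assms(2)
  {
    assume n: "2 < n"
    have bkw: "is_NMG n A P r \<gamma> E" if c1: "cond1 n A E r" and c2: "cond2 n A E P"
    proof -
      obtain rd where rd: "reward_decomp n A E r rd" using c1 unfolding cond1_def by blast
      obtain T where T: "\<forall>i<n. \<forall>s s'. \<forall>a\<in>profiles n A. P s a s' = (\<Sum>j\<in>nbrs E i. T i j s s' (a i) (a j))"
        using trans_decomp[OF c2 G] n by fastforce
      show ?thesis by (rule nmg_from[OF rd T])
    qed
    show "is_NMG n A P r \<gamma> E \<longleftrightarrow> cond1 n A E r \<and> cond2 n A E P"
      using bkw nmg_cond1[OF _ M G] nmg_cond2[OF _ M G n] n by auto
    show "is_zero_sum_NMG n A P r \<gamma> E \<longleftrightarrow> cond1_zero_sum n A E r \<and> cond2 n A E P"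
    proof
      assume Z: "is_zero_sum_NMG n A P r \<gamma> E"
      then have N: "is_NMG n A P r \<gamma> E" unfolding is_zero_sum_NMG_def by blast
      obtain Qd where Q: "Q_decomp n A E r P \<gamma> (\<lambda>_. 0) Qd" and zs: "zero_sum_network n A E Qd"
        using Z unfolding is_zero_sum_NMG_def by blast
      have r0: "r i s a = 0" if i: "i < n" and a: "a \<in> profiles n A" for i s a
      proof -
        have "(\<Sum>i<n. r i s a) = (\<Sum>i<n. \<Sum>j\<in>nbrs E i. Qd i j s (a i) (a j))"
          using Q a unfolding Q_decomp_def Qfun0 by (intro sum.cong) auto
        also have "\<dots> = 0" using zs a unfolding zero_sum_network_def by auto
        finally have "(\<Sum>i<n. r i s a) = 0" .
        moreover have "\<forall>i\<in>{..<n}. 0 \<le> r i s a" using M a unfolding markov_game_def by auto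
        ultimately show ?thesis using i sum_nonneg_eq_0_iff[of "{..<n}" "\<lambda>i. r i s a"] by simp
      qed
      have "reward_decomp n A E r (\<lambda>_ _ _ _ _. 0) \<and> zero_sum_network n A E (\<lambda>_ _ _ _ _. 0)"
        unfolding reward_decomp_def zero_sum_network_def using r0 by auto
      then have "cond1_zero_sum n A E r" unfolding cond1_zero_sum_def by blast
      then show "cond1_zero_sum n A E r \<and> cond2 n A E P" using nmg_cond2[OF N M G n] by blast
    next
      assume H: "cond1_zero_sum n A E r \<and> cond2 n A E P"
      then obtain rd where rd: "reward_decomp n A E r rd" and zs: "zero_sum_network n A E rd"
        unfolding cond1_zero_sum_def by blast
      have "cond1 n A E r" using rd unfolding cond1_def by blast
      then have N: "is_NMG n A P r \<gamma> E" using bkw H by blast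
      have "Q_decomp n A E r P \<gamma> (\<lambda>_. 0) rd"
        using rd unfolding Q_decomp_def Qfun0 reward_decomp_def by auto
      then show "is_zero_sum_NMG n A P r \<gamma> E" unfolding is_zero_sum_NMG_def using N zs by blast
    qed
  }
  {
    assume n: "n = 2"
    define Qd2 where "Qd2 V i j s x y = Qfun r P \<gamma> V i s (\<lambda>k. if k = i then x else if k = j then y else undefined)"
      for V i j s x y
    have G2: "connected_graph 2 E" using G n by simp
    have QD: "Q_decomp n A E r P \<gamma> V (Qd2 V)" for V
      unfolding Q_decomp_def Qd2_def
    proof (intro allI impI ballI)
      fix i s a assume i: "i < n" and a: "a \<in> profiles n A"
      show "Qfun r P \<gamma> V i s a = (\<Sum>j\<in>nbrs E i. Qfun r P \<gamma> V i s (\<lambda>k. if k = i then a i else if k = j then a j else undefined))"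
        using two_decomp[OF G2, of i a A r P \<gamma> V s] i a n by simp
    qed
    show "is_NMG n A P r \<gamma> E" unfolding is_NMG_def using QD by blast
    show "is_zero_sum_NMG n A P r \<gamma> E" if Z: "zero_sum_MG n A r"
    proof -
      have "zero_sum_network n A E (Qd2 (\<lambda>_. 0))"
        unfolding zero_sum_network_def
      proof (intro allI ballI)
        fix s a assume a: "a \<in> profiles n A"
        have "(\<Sum>i<n. \<Sum>j\<in>nbrs E i. Qd2 (\<lambda>_. 0) i j s (a i) (a j)) = (\<Sum>i<n. r i s a)"
        proof (rule sum.cong[OF refl])
          fix i assume "i \<in> {..<n}"
          then show "(\<Sum>j\<in>nbrs E i. Qd2 (\<lambda>_. 0) i j s (a i) (a j)) = r i s a"
            unfolding Qd2_def using two_decomp[OF G2, of i a A r P \<gamma> "\<lambda>_. 0" s] a n by (simp add: Qfun0)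
        qed
        also have "\<dots> = 0" using Z a unfolding zero_sum_MG_def by auto
        finally show "(\<Sum>i<n. \<Sum>j\<in>nbrs E i. Qd2 (\<lambda>_. 0) i j s (a i) (a j)) = 0" .
      qed
      then show ?thesis unfolding is_zero_sum_NMG_def is_NMG_def using QD by blast
    qed
  }
qed


end
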